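(* Let $G=(A\cup B,E)$ be a bipartite graph with $|A|\le 3$. Then for every ordering $\sigma_A$ of $A$, $G$ admits a Stick representation in which, ordering the horizontal segments by where they touch the ground line from left to right, the $i$th horizontal segment corresponds to the $i$th vertex of $\sigma_A$.
   Context: A Stick representation of a bipartite graph $G=(A\cup B,E)$ (with $A$ horizontal and $B$ vertical) assigns to each vertex of $A$ a horizontal segment and to each vertex of $B$ a vertical segment such that the left endpoints of all horizontal segments and the bottom endpoints of all vertical segments lie on a fixed ground line $\ell$ of slope $-1$, and a horizontal and a vertical segment intersect if and only if the corresponding vertices are adjacent in $G$. *)

theory Defs
  imports Complex_Main
begin

text \<open>Ground line: the line y = -x of slope -1 (any fixed line of slope -1 is
  equivalent up to translation).\<close>
definition ground_line :: "(real \<times> real) set" where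
  "ground_line = {(t, -t) | t. True}"

definition hseg :: "real \<Rightarrow> real \<Rightarrow> (real \<times> real) set" where
  "hseg x l = {(u, -x) | u. x \<le> u \<and> u \<le> x + l}"

definition vseg :: "real \<Rightarrow> real \<Rightarrow> (real \<times> real) set" where
  "vseg y l = {(y, v) | v. -y \<le> v \<and> v \<le> -y + l}"

definition stick_rep ::
  "'a set \<Rightarrow> 'b set \<Rightarrow> ('a \<Rightarrow> 'b \<Rightarrow> bool) \<Rightarrow>
   ('a \<Rightarrow> real) \<Rightarrow> ('a \<Rightarrow> real) \<Rightarrow> ('b \<Rightarrow> real) \<Rightarrow> ('b \<Rightarrow> real) \<Rightarrow> bool" where
  "stick_rep A B adj hx hl vx vl \<longleftrightarrow>
     (\<forall>a\<in>A. hl a \<ge> 0) \<and> (\<forall>b\<in>B. vl b \<ge> 0) \<and>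
     (\<forall>a\<in>A. \<forall>b\<in>B. adj a b \<longleftrightarrow> hseg (hx a) (hl a) \<inter> vseg (vx b) (vl b) \<noteq> {})"

end

theory Submission
  imports Defs
begin

lemma inter_iff: "hseg x l \<inter> vseg y m \<noteq> {} \<longleftrightarrow> x \<le> y \<and> y - x \<le> l \<and> y - x \<le> m"
proof
  assume "x \<le> y \<and> y - x \<le> l \<and> y - x \<le> m"
  then have "(y, -x) \<in> hseg x l \<inter> vseg y m" unfolding hseg_def vseg_def by auto
  then show "hseg x l \<inter> vseg y m \<noteq> {}" by blast
qed (auto simp: hseg_def vseg_def)

theorem mainTheorem6:
  fixes A :: "'a set" and B :: "'b set" and adj :: "'a \<Rightarrow> 'b \<Rightarrow> bool"
    and \<sigma> :: "'a list"
  assumes "finite A" and "finite B" and "card A \<le> 3"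
    and "distinct \<sigma>" and "set \<sigma> = A"
  shows "\<exists>hx hl vx vl. stick_rep A B adj hx hl vx vl \<and>
           (\<forall>i j. i < j \<and> j < length \<sigma> \<longrightarrow> hx (\<sigma> ! i) < hx (\<sigma> ! j))"
proof -
  have len: "length \<sigma> \<le> 3" using assms distinct_card by fastforce
  define n where "n = (\<lambda>k b. k < length \<sigma> \<and> adj (\<sigma>!k) b)"
  define hx :: "'a \<Rightarrow> real" where "hx = (\<lambda>a. if a = \<sigma>!0 then 0 else if a = \<sigma>!1 then 1 else 2)"
  define hl :: "'a \<Rightarrow> real" where "hl = (\<lambda>a. if a = \<sigma>!0 then 10 else if a = \<sigma>!1 then 1 else 10)"
  define vx :: "'b \<Rightarrow> real" where "vx = (\<lambda>b. if n 0 b then (if n 1 b then (if n 2 b then 2 else 1) else (if n 2 b then 3 else 0))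
     else (if n 1 b then (if n 2 b then 2 else 1) else (if n 2 b then 2 else -1)))"
  define vl :: "'b \<Rightarrow> real" where "vl = (\<lambda>b. if n 0 b then (if n 1 b then (if n 2 b then 2 else 1) else (if n 2 b then 3 else 0))
     else (if n 1 b then (if n 2 b then 1 else 0) else 0))"
  have d01: "1 < length \<sigma> \<Longrightarrow> \<sigma>!0 \<noteq> \<sigma>!1" using assms(4) nth_eq_iff_index_eq by fastforce
  have d02: "2 < length \<sigma> \<Longrightarrow> \<sigma>!0 \<noteq> \<sigma>!2" using assms(4) nth_eq_iff_index_eq by fastforce
  have d12: "2 < length \<sigma> \<Longrightarrow> \<sigma>!1 \<noteq> \<sigma>!2" using assms(4) nth_eq_iff_index_eq by fastforce
  have hxk: "hx (\<sigma>!k) = real k" if "k < length \<sigma>" for k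
    using that len d01 d02 d12 unfolding hx_def
    by (cases "k = 0 \<or> k = 1 \<or> k = 2") auto
  have hlk: "hl (\<sigma>!k) = (if k = 1 then 1 else 10)" if "k < length \<sigma>" for k
    using that len d01 d02 d12 unfolding hl_def
    by (cases "k = 0 \<or> k = 1 \<or> k = 2") auto
  have rep: "stick_rep A B adj hx hl vx vl"
    unfolding stick_rep_def
  proof (intro conjI ballI)
    fix a assume "a \<in> A" then show "hl a \<ge> 0" unfolding hl_def by auto
  next
    fix b assume "b \<in> B" then show "vl b \<ge> 0" unfolding vl_def by auto
  next
    fix a b assume "a \<in> A" "b \<in> B"
    then obtain k where k: "k < length \<sigma>" "a = \<sigma>!k" using assms(5) by (auto simp: in_set_conv_nth)
    have adjk: "adj a b = n k b" using k unfolding n_def by auto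
    have k3: "k = 0 \<or> k = 1 \<or> k = 2" using k len by linarith
    show "adj a b \<longleftrightarrow> hseg (hx a) (hl a) \<inter> vseg (vx b) (vl b) \<noteq> {}"
      unfolding inter_iff adjk using k3 hxk[OF k(1)] hlk[OF k(1)] k(2)
      by (auto simp: vx_def vl_def)
  qed
  show ?thesis
    by (rule exI[of _ hx], rule exI[of _ hl], rule exI[of _ vx], rule exI[of _ vl])
      (use rep hxk in auto)
qed

end
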